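(* Let $\mathbf{x}\in\mathbb{R}^3\setminus\mathbb{I}$ lie outside the region enclosed by $\mathcal{M}$, and suppose its dispersed projection $\mathbf{s}$ lies in the relative interior of a face $T=(\mathbf{v}_1,\mathbf{v}_2,\mathbf{v}_3)$ of $\mathcal{M}$, with barycentric coordinates $(\alpha_1,\alpha_2,\alpha_3)$ with respect to $T$ (so $\mathbf{s}=\mathbf{s}_T$ is obtained by barycentric interpolated projection with orientation $\sigma=+1$). Let $l=\langle \mathbf{x}-\mathbf{v}_1,\mathbf{n}_T\rangle$ be the distance from $\mathbf{x}$ to the plane of $T$, and let $\mathbf{a}_i=\hat{\mathbf{n}}^{T,+}_i/\langle \hat{\mathbf{n}}^{T,+}_i,\mathbf{n}_T\rangle$. Then $$\mathbf{x}-\mathbf{s}=l\sum_{i=1}^3\alpha_i\,\mathbf{a}_i .$$ Consequently $\mathbf{x}-\mathbf{s}=c\,\mathbf{n}_{\mathbf{s}}$ with $c=\|\mathbf{x}-\mathbf{s}\|>0$, where $\mathbf{n}_{\mathbf{s}}=\mathbf{w}/\|\mathbf{w}\|$, $\mathbf{w}=\sum_i\alpha_i\mathbf{a}_i\neq 0$, is a unit vector depending only on $T$ (with its aligned vertex normals) and the barycentric coordinates of $\mathbf{s}$, and not otherwise on $\mathbf{x}$.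
   Context: Let $\mathcal{M}$ be a triangle mesh in $\mathbb{R}^3$ that is watertight (closed, without self-intersections) and has no faces of zero area. Each face $T=(\mathbf{v}_1,\mathbf{v}_2,\mathbf{v}_3)$ has an outward unit face normal $\mathbf{n}_T$; each vertex $\mathbf{v}$ has a unit vertex normal $\mathbf{n}_{\mathbf{v}}$, and for every face $T$ and every vertex $\mathbf{v}$ of $T$, $\langle \mathbf{n}_{\mathbf{v}},\mathbf{n}_T\rangle>0$. Vertex normal alignment of a face $T$ with orientation $\sigma\in\{+1,-1\}$: put $\mathbf{m}_T=\sigma\mathbf{n}_T$; for each $i\in\{1,2,3\}$ let $j,k$ be the other two indices, $\mathbf{e}_1=\mathbf{v}_j-\mathbf{v}_i$, $\mathbf{e}_2=\mathbf{v}_k-\mathbf{v}_i$, $\mathbf{m}_i=\sigma\mathbf{n}_{\mathbf{v}_i}$, write the in-plane part $\mathbf{m}_i-\langle\mathbf{m}_i,\mathbf{m}_T\rangle\mathbf{m}_T=c_1\mathbf{e}_1+c_2\mathbf{e}_2$, and define the aligned normal $\hat{\mathbf{n}}^{T,\sigma}_i=(\mathbf{m}_i-\max(0,c_1)\mathbf{e}_1-\max(0,c_2)\mathbf{e}_2)/\|\mathbf{m}_i-\max(0,c_1)\mathbf{e}_1-\max(0,c_2)\mathbf{e}_2\|$. (Aligned normals depend on the face $T$, not only on the vertex.) Barycentric interpolated projection onto $T$ with orientation $\sigma$: for $\mathbf{x}$ with $l:=\langle\mathbf{x}-\mathbf{v}_1,\sigma\mathbf{n}_T\rangle\ge 0$,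 set $\mathbf{v}_i'=\mathbf{v}_i+\big(l/\langle\hat{\mathbf{n}}^{T,\sigma}_i,\sigma\mathbf{n}_T\rangle\big)\hat{\mathbf{n}}^{T,\sigma}_i$, forming the parallel triangle $T'=(\mathbf{v}_1',\mathbf{v}_2',\mathbf{v}_3')$ in the plane through $\mathbf{x}$ parallel to $T$. If $\mathbf{x}\in T'$, i.e. $\mathbf{x}=\sum_i\alpha_i\mathbf{v}_i'$ with $\alpha_i\ge0$, $\sum_i\alpha_i=1$, the projection is $\mathbf{s}_T=\sum_i\alpha_i\mathbf{v}_i$. Dispersed projection of $\mathbf{x}$ (with $\sigma=+1$ if $\mathbf{x}$ is outside the region enclosed by $\mathcal{M}$ and $\sigma=-1$ if inside): (1) compute the nearest point $\tilde{\mathbf{s}}$ of $\mathcal{M}$ to $\mathbf{x}$; (2) let $\mathcal{T}$ be the set of faces containing $\tilde{\mathbf{s}}$; (3) apply vertex normal alignment with orientation $\sigma$ to each $T\in\mathcal{T}$; (4) discard those $T$ with $\mathbf{x}\notin T'$; (5) compute $\mathbf{s}_T$ for the remaining $T$; (6) let $\mathbf{s}$ be the $\mathbf{s}_T$ nearest to $\mathbf{x}$. It is assumed that for every $\mathbf{x}\in\mathbb{R}^3$ at least one face survives step (4), so $\mathbf{s}$ is defined. Exceptional set: for a face $T$, orientation $\sigma$, and $\mathbf{a}^{T,\sigma}_i=\hat{\mathbf{n}}^{T,\sigma}_i/\langle\hat{\mathbf{n}}^{T,\sigma}_i,\sigma\mathbf{n}_T\rangle$, let $\mathbb{I}$ be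 the union over all faces $T$, both $\sigma$, and all pairs of distinct vertices $\mathbf{v}_i,\mathbf{v}_j$ of $T$ of the bilinear surfaces $\{(1-u)\mathbf{v}_i+u\mathbf{v}_j+t((1-u)\mathbf{a}^{T,\sigma}_i+u\mathbf{a}^{T,\sigma}_j): u\in[0,1],t\ge0\}$ (a set of Lebesgue measure zero). *)

theory Defs
  imports "HOL-Analysis.Analysis"
begin

type_synonym point = "real^3"
type_synonym face = "point \<times> point \<times> point"

text \<open>Vertex i (i = 1,2,3) of a face; indices outside 1..3 default to the third vertex.\<close>
definition vtx :: "face \<Rightarrow> nat \<Rightarrow> point" where
  "vtx T i = (case T of (a, b, c) \<Rightarrow> if i = 1 then a else if i = 2 then b else c)"

definition nxt :: "nat \<Rightarrow> nat" where
  "nxt i = (if i = 3 then 1 else i + 1)"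

definition verts :: "face \<Rightarrow> point set" where
  "verts T = {vtx T 1, vtx T 2, vtx T 3}"

definition tri :: "face \<Rightarrow> point set" where
  "tri T = convex hull (verts T)"

definition msurf :: "face set \<Rightarrow> point set" where
  "msurf F = (\<Union>T\<in>F. tri T)"

text \<open>Watertight: closed (every edge of every face is shared by exactly two faces) and
  without self-intersections (two distinct faces meet exactly in the hull of their common
  vertices).\<close>
definition watertight :: "face set \<Rightarrow> bool" where
  "watertight F \<longleftrightarrow> finite F \<and> F \<noteq> {} \<and>
     (\<forall>T\<in>F. \<forall>i\<in>{1,2,3::nat}.
        card {T'\<in>F. {vtx T i, vtx T (nxt i)} \<subseteq> verts T'} = 2) \<and>
     (\<forall>T\<in>F. \<forall>T'\<in>F. T \<noteq> T' \<longrightarrow> tri T \<inter> tri T' = convex hull (verts T \<inter> verts T'))"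

definition nondegenerate :: "face set \<Rightarrow> bool" where
  "nondegenerate F \<longleftrightarrow> (\<forall>T\<in>F. \<not> collinear (verts T))"

definition outward_face_normals :: "face set \<Rightarrow> (face \<Rightarrow> point) \<Rightarrow> bool" where
  "outward_face_normals F nf \<longleftrightarrow> (\<forall>T\<in>F.
     norm (nf T) = 1 \<and>
     nf T \<bullet> (vtx T 2 - vtx T 1) = 0 \<and> nf T \<bullet> (vtx T 3 - vtx T 1) = 0 \<and>
     (\<forall>p\<in>rel_interior (tri T). \<exists>\<epsilon>>0. \<forall>t. 0 < t \<and> t < \<epsilon> \<longrightarrow>
        p + t *\<^sub>R nf T \<in> outside (msurf F) \<and> p - t *\<^sub>R nf T \<in> inside (msurf F)))"

definition good_vertex_normals :: "face set \<Rightarrow> (face \<Rightarrow> point) \<Rightarrow> (point \<Rightarrow> point) \<Rightarrow> bool" where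
  "good_vertex_normals F nf nv \<longleftrightarrow>
     (\<forall>T\<in>F. \<forall>v\<in>verts T. norm (nv v) = 1 \<and> nv v \<bullet> nf T > 0)"

definition inplane_coeffs :: "point \<Rightarrow> point \<Rightarrow> point \<Rightarrow> real \<times> real" where
  "inplane_coeffs e1 e2 p = (THE c. p = fst c *\<^sub>R e1 + snd c *\<^sub>R e2)"

definition aligned_normal ::
  "(face \<Rightarrow> point) \<Rightarrow> (point \<Rightarrow> point) \<Rightarrow> real \<Rightarrow> face \<Rightarrow> nat \<Rightarrow> point" where
  "aligned_normal nf nv \<sigma> T i =
     (let mT = \<sigma> *\<^sub>R nf T;
          vi = vtx T i;
          e1 = vtx T (nxt i) - vi;
          e2 = vtx T (nxt (nxt i)) - vi;
          m = \<sigma> *\<^sub>R nv vi;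
          c = inplane_coeffs e1 e2 (m - (m \<bullet> mT) *\<^sub>R mT);
          u = m - max 0 (fst c) *\<^sub>R e1 - max 0 (snd c) *\<^sub>R e2
      in u /\<^sub>R norm u)"

definition avec ::
  "(face \<Rightarrow> point) \<Rightarrow> (point \<Rightarrow> point) \<Rightarrow> real \<Rightarrow> face \<Rightarrow> nat \<Rightarrow> point" where
  "avec nf nv \<sigma> T i =
     aligned_normal nf nv \<sigma> T i /\<^sub>R (aligned_normal nf nv \<sigma> T i \<bullet> (\<sigma> *\<^sub>R nf T))"

definition offset :: "(face \<Rightarrow> point) \<Rightarrow> real \<Rightarrow> face \<Rightarrow> point \<Rightarrow> real" where
  "offset nf \<sigma> T x = (x - vtx T 1) \<bullet> (\<sigma> *\<^sub>R nf T)"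

text \<open>Barycentric interpolated projection: s is a projection of x onto T with orientation \<sigma>,
  i.e. l \<ge> 0, x lies in the parallel triangle T' with barycentric coordinates \<alpha>, and
  s = \<Sum> \<alpha>_i v_i.  (Step (4) "x \<in> T'" holds iff such an s exists.)\<close>
definition bip ::
  "(face \<Rightarrow> point) \<Rightarrow> (point \<Rightarrow> point) \<Rightarrow> real \<Rightarrow> face \<Rightarrow> point \<Rightarrow> point \<Rightarrow> bool" where
  "bip nf nv \<sigma> T x s \<longleftrightarrow> offset nf \<sigma> T x \<ge> 0 \<and>
     (\<exists>\<alpha> :: nat \<Rightarrow> real. (\<forall>i\<in>{1,2,3}. \<alpha> i \<ge> 0) \<and> (\<Sum>i\<in>{1,2,3}. \<alpha> i) = 1 \<and>
        x = (\<Sum>i\<in>{1,2,3}. \<alpha> i *\<^sub>R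
               (vtx T i + offset nf \<sigma> T x *\<^sub>R avec nf nv \<sigma> T i)) \<and>
        s = (\<Sum>i\<in>{1,2,3}. \<alpha> i *\<^sub>R vtx T i))"

definition orient :: "face set \<Rightarrow> point \<Rightarrow> real" where
  "orient F x = (if x \<in> inside (msurf F) then -1 else 1)"

definition nearest_point :: "face set \<Rightarrow> point \<Rightarrow> point \<Rightarrow> bool" where
  "nearest_point F x p \<longleftrightarrow> p \<in> msurf F \<and> (\<forall>y\<in>msurf F. dist x p \<le> dist x y)"

text \<open>s is a dispersed projection of x (for some choice of nearest point, ties allowed).\<close>
definition dispersed_proj ::
  "face set \<Rightarrow> (face \<Rightarrow> point) \<Rightarrow> (point \<Rightarrow> point) \<Rightarrow> point \<Rightarrow> point \<Rightarrow> bool" where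
  "dispersed_proj F nf nv x s \<longleftrightarrow> (\<exists>p. nearest_point F x p \<and>
     (\<exists>T\<in>F. p \<in> tri T \<and> bip nf nv (orient F x) T x s) \<and>
     (\<forall>T\<in>F. \<forall>s'. p \<in> tri T \<and> bip nf nv (orient F x) T x s' \<longrightarrow> dist x s \<le> dist x s'))"

text \<open>Standing assumption: for every x and every nearest point, some face survives step (4).\<close>
definition dispersed_proj_defined ::
  "face set \<Rightarrow> (face \<Rightarrow> point) \<Rightarrow> (point \<Rightarrow> point) \<Rightarrow> bool" where
  "dispersed_proj_defined F nf nv \<longleftrightarrow> (\<forall>x p. nearest_point F x p \<longrightarrow>
     (\<exists>T\<in>F. p \<in> tri T \<and> (\<exists>s. bip nf nv (orient F x) T x s)))"

definition exceptional_set ::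
  "face set \<Rightarrow> (face \<Rightarrow> point) \<Rightarrow> (point \<Rightarrow> point) \<Rightarrow> point set" where
  "exceptional_set F nf nv = (\<Union>T\<in>F. \<Union>\<sigma>\<in>{1, -1}. \<Union>i\<in>{1,2,3}. \<Union>j\<in>{1,2,3}.
     if vtx T i = vtx T j then {} else
     {(1 - u) *\<^sub>R vtx T i + u *\<^sub>R vtx T j +
        t *\<^sub>R ((1 - u) *\<^sub>R avec nf nv \<sigma> T i + u *\<^sub>R avec nf nv \<sigma> T j) |
      u t. 0 \<le> u \<and> u \<le> 1 \<and> t \<ge> 0})"

end

theory Submission imports Defs "HOL-Analysis.Cross3" begin
lemma ident3: fixes p e1 e2 :: "real^3"
  shows "((cross3 e1 e2) \<bullet> (cross3 e1 e2)) *\<^sub>R p = ((cross3 p e2) \<bullet> (cross3 e1 e2)) *\<^sub>R e1 + ((cross3 e1 p) \<bullet> (cross3 e1 e2)) *\<^sub>R e2 + (p \<bullet> (cross3 e1 e2)) *\<^sub>R (cross3 e1 e2)"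
  unfolding cross3_def inner_vec_def sum_3 vec_eq_iff forall_3 vector_def
  by (simp add: algebra_simps) 
lemma lagr: fixes a b c d :: "real^3"
  shows "(cross3 a b) \<bullet> (cross3 c d) = (a \<bullet> c) * (b \<bullet> d) - (a \<bullet> d) * (b \<bullet> c)"
  unfolding cross3_def inner_vec_def sum_3 vector_def
  by (simp add: algebra_simps)

lemma par: fixes n e1 e2 :: "real^3"
  assumes "n \<bullet> e1 = 0" "n \<bullet> e2 = 0"
  shows "((cross3 e1 e2) \<bullet> (cross3 e1 e2)) *\<^sub>R n = (n \<bullet> (cross3 e1 e2)) *\<^sub>R (cross3 e1 e2)"
  using ident3[of e1 e2 n] assms by (simp add: lagr inner_commute)

lemma cross3_scale_left: "cross3 (c *\<^sub>R x) y = c *\<^sub>R cross3 x y"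
  unfolding cross3_def vec_eq_iff forall_3 vector_def by (simp add: algebra_simps)
lemma cross3_scale_right: "cross3 x (c *\<^sub>R y) = c *\<^sub>R cross3 x y"
  unfolding cross3_def vec_eq_iff forall_3 vector_def by (simp add: algebra_simps)
lemma cross3_add_left: "cross3 (x + z) y = cross3 x y + cross3 z y"
  unfolding cross3_def vec_eq_iff forall_3 vector_def by (simp add: algebra_simps)
lemma cross3_add_right: "cross3 x (y + z) = cross3 x y + cross3 x z"
  unfolding cross3_def vec_eq_iff forall_3 vector_def by (simp add: algebra_simps)
lemma cross3_self: "cross3 x x = 0"
  unfolding cross3_def vec_eq_iff forall_3 vector_def by (simp add: algebra_simps)

lemma inplane_unique: fixes p e1 e2 :: "real^3"
  assumes N: "cross3 e1 e2 \<noteq> 0" and p: "p \<bullet> cross3 e1 e2 = 0"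
  shows "\<exists>!c. p = fst c *\<^sub>R e1 + snd c *\<^sub>R e2"
proof -
  let ?N = "cross3 e1 e2"
  have NN: "?N \<bullet> ?N \<noteq> 0" using N by simp
  have ex: "p = fst c *\<^sub>R e1 + snd c *\<^sub>R e2" if "c = ((cross3 p e2 \<bullet> ?N) / (?N \<bullet> ?N), (cross3 e1 p \<bullet> ?N) / (?N \<bullet> ?N))" for c
  proof -
    have "(?N \<bullet> ?N) *\<^sub>R p = (?N \<bullet> ?N) *\<^sub>R (fst c *\<^sub>R e1 + snd c *\<^sub>R e2)"
      using ident3[of e1 e2 p] p NN that by (simp add: scaleR_add_right)
    then show ?thesis using NN by simp
  qed
  have un: "c = d" if "p = fst c *\<^sub>R e1 + snd c *\<^sub>R e2" "p = fst d *\<^sub>R e1 + snd d *\<^sub>R e2" for c d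
  proof -
    have e: "(fst c - fst d) *\<^sub>R e1 + (snd c - snd d) *\<^sub>R e2 = 0" using that by (simp add: algebra_simps)
    have "cross3 ((fst c - fst d) *\<^sub>R e1 + (snd c - snd d) *\<^sub>R e2) e2 = 0" using e by simp
    then have "(fst c - fst d) *\<^sub>R ?N = 0"
      by (simp add: cross3_add_left cross3_scale_left)
    then have 1: "fst c = fst d" using N by simp
    have "cross3 e1 ((fst c - fst d) *\<^sub>R e1 + (snd c - snd d) *\<^sub>R e2) = 0" using e by simp
    then have "(snd c - snd d) *\<^sub>R ?N = 0"
      by (simp add: cross3_add_right cross3_scale_right)
    then have 2: "snd c = snd d" using N by simp
    show ?thesis using 1 2 by (simp add: prod_eq_iff)
  qed
  show ?thesis using ex un by blast
qed

lemma inplane_swap: fixes p e1 e2 :: "real^3"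
  assumes N: "cross3 e1 e2 \<noteq> 0" and p: "p \<bullet> cross3 e1 e2 = 0"
  shows "inplane_coeffs e2 e1 p = prod.swap (inplane_coeffs e1 e2 p)"
proof -
  have u: "\<exists>!c. p = fst c *\<^sub>R e1 + snd c *\<^sub>R e2" using inplane_unique[OF N p] .
  have h1: "p = fst (inplane_coeffs e1 e2 p) *\<^sub>R e1 + snd (inplane_coeffs e1 e2 p) *\<^sub>R e2"
    unfolding inplane_coeffs_def using theI'[OF u] .
  have u2: "\<exists>!c. p = fst c *\<^sub>R e2 + snd c *\<^sub>R e1"
  proof -
    from u obtain c where c: "p = fst c *\<^sub>R e1 + snd c *\<^sub>R e2" by blast
    show ?thesis
    proof (rule ex1I[of _ "prod.swap c"])
      show "p = fst (prod.swap c) *\<^sub>R e2 + snd (prod.swap c) *\<^sub>R e1" using c by (simp add: add.commute)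
      fix d assume "p = fst d *\<^sub>R e2 + snd d *\<^sub>R e1"
      then have "p = fst (prod.swap d) *\<^sub>R e1 + snd (prod.swap d) *\<^sub>R e2" by (simp add: add.commute)
      with c u have "prod.swap d = c" by blast
      then show "d = prod.swap c" by auto
    qed
  qed
  have "p = fst (prod.swap (inplane_coeffs e1 e2 p)) *\<^sub>R e2 + snd (prod.swap (inplane_coeffs e1 e2 p)) *\<^sub>R e1"
    using h1 by (simp add: add.commute)
  then have "(THE c. p = fst c *\<^sub>R e2 + snd c *\<^sub>R e1) = prod.swap (inplane_coeffs e1 e2 p)"
    by (rule the1_equality[OF u2])
  then show ?thesis unfolding inplane_coeffs_def .
qed

definition al :: "point \<Rightarrow> point \<Rightarrow> point \<Rightarrow> point \<Rightarrow> point" where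
  "al n e1 e2 m = (let c = inplane_coeffs e1 e2 (m - (m \<bullet> n) *\<^sub>R n);
      u = m - max 0 (fst c) *\<^sub>R e1 - max 0 (snd c) *\<^sub>R e2 in u /\<^sub>R norm u)"

lemma aligned_al: "aligned_normal nf nv 1 T i =
  al (nf T) (vtx T (nxt i) - vtx T i) (vtx T (nxt (nxt i)) - vtx T i) (nv (vtx T i))"
  by (simp add: aligned_normal_def al_def Let_def)

lemma al_sym:
  fixes n e1 e2 f1 f2 m :: point
  assumes N: "cross3 e1 e2 \<noteq> 0" and nn: "n \<bullet> n = 1" and nk: "n = k *\<^sub>R cross3 e1 e2"
    and eps: "\<epsilon> = 1 \<or> \<epsilon> = -1"
    and f: "(f1 = e1 \<and> f2 = e2) \<or> (f1 = e2 \<and> f2 = e1)"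
  shows "al (\<epsilon> *\<^sub>R n) f1 f2 m = al n e1 e2 m"
proof -
  have ee: "\<epsilon> * \<epsilon> = 1" using eps by auto
  have q: "(m \<bullet> (\<epsilon> *\<^sub>R n)) *\<^sub>R (\<epsilon> *\<^sub>R n) = (m \<bullet> n) *\<^sub>R n"
    using eps by auto
  define p where "p = m - (m \<bullet> n) *\<^sub>R n"
  have pn: "p \<bullet> n = 0" unfolding p_def by (simp add: inner_diff_left nn)
  have k0: "k \<noteq> 0" using nn nk by auto
  have pN: "p \<bullet> cross3 e1 e2 = 0"
  proof -
    have "p \<bullet> n = k * (p \<bullet> cross3 e1 e2)" using nk by simp
    then show ?thesis using pn k0 by simp
  qed
  show ?thesis
  proof (cases "f1 = e1 \<and> f2 = e2")
    case True then show ?thesis unfolding al_def Let_def q by simp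
  next
    case False
    then have ff: "f1 = e2" "f2 = e1" using f by auto
    have sw: "inplane_coeffs e2 e1 p = prod.swap (inplane_coeffs e1 e2 p)"
      by (rule inplane_swap[OF N pN])
    show ?thesis unfolding al_def Let_def q ff p_def[symmetric] sw
      by (simp add: algebra_simps)
  qed
qed

lemma vtx_simps [simp]: "vtx (a,b,c) 1 = a" "vtx (a,b,c) 2 = b" "vtx (a,b,c) 3 = c" "vtx (a,b,c) (Suc 0) = a"
  by (auto simp: vtx_def)
lemma nxt_simps [simp]: "nxt 1 = 2" "nxt 2 = 3" "nxt 3 = 1" "nxt (Suc 0) = 2"
  by (auto simp: nxt_def)

lemma cyc:
  assumes "j \<in> {1,2,3::nat}"
  shows "cross3 (vtx T (nxt j) - vtx T j) (vtx T (nxt (nxt j)) - vtx T j) =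
         cross3 (vtx T 2 - vtx T 1) (vtx T 3 - vtx T 1)"
proof -
  obtain a b c where T: "T = (a,b,c)" by (cases T)
  have e: "cross3 (c - b) (a - b) = cross3 (b - a) (c - a)" "cross3 (a - c) (b - c) = cross3 (b - a) (c - a)"
    unfolding cross3_def vec_eq_iff forall_3 vector_def by (simp_all add: algebra_simps)
  show ?thesis using assms e by (auto simp: T)
qed

lemma pair_lemma:
  fixes T T0 :: face
  assumes d: "distinct [vtx T 1, vtx T 2, vtx T 3]" and d0: "distinct [vtx T0 1, vtx T0 2, vtx T0 3]"
    and V: "verts T0 = verts T" and i: "i \<in> {1,2,3::nat}" and j: "j \<in> {1,2,3::nat}"
    and ij: "vtx T0 i = vtx T j"
  shows "(vtx T0 (nxt i) = vtx T (nxt j) \<and> vtx T0 (nxt (nxt i)) = vtx T (nxt (nxt j))) \<or>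
         (vtx T0 (nxt i) = vtx T (nxt (nxt j)) \<and> vtx T0 (nxt (nxt i)) = vtx T (nxt j))"
proof -
  have h: "{vtx S (nxt k), vtx S (nxt (nxt k))} = verts S - {vtx S k}"
    if "distinct [vtx S 1, vtx S 2, vtx S 3]" "k \<in> {1,2,3::nat}" for S k
  proof -
    from that(2) have "k = 1 \<or> k = 2 \<or> k = 3" by auto
    then show ?thesis using that(1) unfolding verts_def by (elim disjE) (simp_all add: insert_Diff_if insert_commute, auto)
  qed
  have "{vtx T0 (nxt i), vtx T0 (nxt (nxt i))} = {vtx T (nxt j), vtx T (nxt (nxt j))}"
    using h[OF d0 i] h[OF d j] V ij by simp
  then show ?thesis by (simp add: doubleton_eq_iff)
qed

lemma bary_unique:
  fixes V :: "'a::real_vector set"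
  assumes "finite V" "\<not> affine_dependent V" "sum u V = 1" "sum w V = 1"
    "(\<Sum>x\<in>V. u x *\<^sub>R x) = (\<Sum>x\<in>V. w x *\<^sub>R x)" "v \<in> V"
  shows "u v = w v"
proof (rule ccontr)
  assume ne: "u v \<noteq> w v"
  have "affine_dependent V" unfolding affine_dependent_explicit_finite[OF assms(1)]
  proof (intro exI conjI)
    show "sum (\<lambda>x. u x - w x) V = 0" using assms(3,4) by (simp add: sum_subtractf)
    show "\<exists>v\<in>V. u v - w v \<noteq> 0" using ne assms(6) by auto
    show "(\<Sum>x\<in>V. (u x - w x) *\<^sub>R x) = 0" using assms(5) by (simp add: scaleR_diff_left sum_subtractf)
  qed
  then show False using assms(2) by simp
qed

lemma relint_not_facet:
  fixes V :: "'a::euclidean_space set"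
  assumes fin: "finite V" and ai: "\<not> affine_dependent V" and v: "v \<in> V"
    and y: "y \<in> rel_interior (convex hull V)" and y2: "y \<in> convex hull (V - {v})"
  shows False
proof -
  obtain u where u: "\<forall>x\<in>V. 0 < u x" "sum u V = 1" "(\<Sum>x\<in>V. u x *\<^sub>R x) = y"
    using rel_interior_convex_hull_explicit[OF ai] y by auto
  obtain w where w: "\<forall>x\<in>V-{v}. 0 \<le> w x" "sum w (V-{v}) = 1" "(\<Sum>x\<in>V-{v}. w x *\<^sub>R x) = y"
  proof -
    have "y \<in> {y. \<exists>u. (\<forall>x\<in>V-{v}. 0 \<le> u x) \<and> sum u (V-{v}) = 1 \<and> (\<Sum>x\<in>V-{v}. u x *\<^sub>R x) = y}"
      using y2 convex_hull_finite[of "V-{v}"] fin by simp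
    then show ?thesis using that by blast
  qed
  define w' where "w' = w(v := 0)"
  have e1: "sum w' (V - {v}) = sum w (V - {v})" by (rule sum.cong) (auto simp: w'_def)
  have e2: "(\<Sum>x\<in>V-{v}. w' x *\<^sub>R x) = (\<Sum>x\<in>V-{v}. w x *\<^sub>R x)" by (rule sum.cong) (auto simp: w'_def)
  have s1: "sum w' V = 1" using sum.remove[OF fin v, of w'] e1 w by (simp add: w'_def)
  have s2: "(\<Sum>x\<in>V. w' x *\<^sub>R x) = y" using sum.remove[OF fin v, of "\<lambda>x. w' x *\<^sub>R x"] e2 w
    by (simp add: w'_def)
  have "u v = w' v" by (rule bary_unique[OF fin ai u(2) s1]) (use u s2 v in auto)
  moreover have "0 < u v" using u(1) v by blast
  ultimately show False by (simp add: w'_def)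
qed

lemma orth_all:
  fixes n a b c u w :: point
  assumes "n \<bullet> (b - a) = 0" "n \<bullet> (c - a) = 0" "u \<in> {a,b,c}" "w \<in> {a,b,c}"
  shows "n \<bullet> (u - w) = 0"
proof -
  have h: "n \<bullet> z = n \<bullet> a" if "z \<in> {a,b,c}" for z
  proof -
    have "z = a \<or> z = b \<or> z = c" using that by simp
    moreover have "n \<bullet> b = n \<bullet> a" "n \<bullet> c = n \<bullet> a" using assms(1,2) by (simp_all add: inner_diff_right)
    ultimately show ?thesis by (elim disjE) simp_all
  qed
  show ?thesis using h[OF assms(3)] h[OF assms(4)] by (simp add: inner_diff_right)
qed

theorem lemma1:
  fixes F :: "face set" and nf :: "face \<Rightarrow> point" and nv :: "point \<Rightarrow> point"
    and x s :: point and T :: face and \<alpha> :: "nat \<Rightarrow> real"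
  assumes "watertight F" and "nondegenerate F"
    and "outward_face_normals F nf" and "good_vertex_normals F nf nv"
    and "dispersed_proj_defined F nf nv"
    and "x \<notin> exceptional_set F nf nv"
    and "x \<in> outside (msurf F)"
    and "dispersed_proj F nf nv x s"
    and "T \<in> F" and "s \<in> rel_interior (tri T)"
    and "\<forall>i\<in>{1,2,3}. \<alpha> i \<ge> 0" and "(\<Sum>i\<in>{1,2,3}. \<alpha> i) = 1"
    and "s = (\<Sum>i\<in>{1,2,3}. \<alpha> i *\<^sub>R vtx T i)"
  shows "x - s = offset nf 1 T x *\<^sub>R (\<Sum>i\<in>{1,2,3}. \<alpha> i *\<^sub>R avec nf nv 1 T i)
       \<and> (\<Sum>i\<in>{1,2,3}. \<alpha> i *\<^sub>R avec nf nv 1 T i) \<noteq> 0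
       \<and> norm (x - s) > 0
       \<and> x - s = norm (x - s) *\<^sub>R
           ((\<Sum>i\<in>{1,2,3}. \<alpha> i *\<^sub>R avec nf nv 1 T i) /\<^sub>R
             norm (\<Sum>i\<in>{1,2,3}. \<alpha> i *\<^sub>R avec nf nv 1 T i))"
proof -
  define W where "W = (\<Sum>i\<in>{1,2,3}. \<alpha> i *\<^sub>R avec nf nv 1 T i)"
  define l where "l = offset nf 1 T x"
  have sum3: "(\<Sum>i\<in>{1,2,3::nat}. f i) = f 1 + f 2 + f 3" for f :: "nat \<Rightarrow> 'b::comm_monoid_add"
    by (simp add: add.assoc)
  have xni: "x \<notin> inside (msurf F)"
    using assms(7) inside_Int_outside[of "msurf F"] by (metis IntI empty_iff)
  have xni: "x \<notin> inside (msurf F)"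
    using assms(7) inside_Int_outside[of "msurf F"] by (metis IntI empty_iff)
  have orx: "orient F x = 1" using xni unfolding orient_def by simp
  from assms(8) obtain p where "\<exists>T\<in>F. p \<in> tri T \<and> bip nf nv (orient F x) T x s"
    unfolding dispersed_proj_def by (elim exE conjE) (rule that)
  then obtain T0 where T0: "T0 \<in> F" "bip nf nv 1 T0 x s" unfolding orx by (elim bexE conjE) (rule that)
  define l0 where "l0 = offset nf 1 T0 x"
  have "l0 \<ge> 0 \<and> (\<exists>\<beta> :: nat \<Rightarrow> real. (\<forall>i\<in>{1,2,3}. \<beta> i \<ge> 0) \<and> (\<Sum>i\<in>{1,2,3}. \<beta> i) = 1 \<and>
        x = (\<Sum>i\<in>{1,2,3}. \<beta> i *\<^sub>R (vtx T0 i + l0 *\<^sub>R avec nf nv 1 T0 i)) \<and>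
        s = (\<Sum>i\<in>{1,2,3}. \<beta> i *\<^sub>R vtx T0 i))"
    using T0(2) unfolding bip_def l0_def .
  then obtain \<beta> where l0: "l0 \<ge> 0" and \<beta>: "\<forall>i\<in>{1,2,3}. \<beta> i \<ge> 0" "sum \<beta> {1,2,3} = 1"
     "x = (\<Sum>i\<in>{1,2,3}. \<beta> i *\<^sub>R (vtx T0 i + l0 *\<^sub>R avec nf nv 1 T0 i))"
     "s = (\<Sum>i\<in>{1,2,3}. \<beta> i *\<^sub>R vtx T0 i)" by (elim exE conjE) (rule that)
  obtain a b c where Tabc: "T = (a,b,c)" by (cases T)
  obtain a0 b0 c0 where T0abc: "T0 = (a0,b0,c0)" by (cases T0)
  have vT: "verts T = {a,b,c}" "verts T0 = {a0,b0,c0}" by (simp_all add: verts_def Tabc T0abc)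
  have ncol: "\<not> collinear {a,b,c}" using assms(2) assms(9) vT unfolding nondegenerate_def by metis
  have ncol0: "\<not> collinear {a0,b0,c0}" using assms(2) T0(1) vT unfolding nondegenerate_def by metis
  have dist: "a \<noteq> b" "a \<noteq> c" "b \<noteq> c" using ncol unfolding collinear_3_eq_affine_dependent by simp_all
  have dist0: "a0 \<noteq> b0" "a0 \<noteq> c0" "b0 \<noteq> c0" using ncol0 unfolding collinear_3_eq_affine_dependent by simp_all
  have aff: "\<not> affine_dependent {a,b,c}" using ncol affine_dependent_imp_collinear_3 by metis
  have OT: "norm (nf T) = 1 \<and> nf T \<bullet> (vtx T 2 - vtx T 1) = 0 \<and> nf T \<bullet> (vtx T 3 - vtx T 1) = 0 \<and>
     (\<forall>p\<in>rel_interior (tri T). \<exists>\<epsilon>>0. \<forall>t. 0 < t \<and> t < \<epsilon> \<longrightarrow>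
        p + t *\<^sub>R nf T \<in> outside (msurf F) \<and> p - t *\<^sub>R nf T \<in> inside (msurf F))"
    using assms(3) assms(9) unfolding outward_face_normals_def by (rule bspec)
  have OT0: "norm (nf T0) = 1 \<and> nf T0 \<bullet> (vtx T0 2 - vtx T0 1) = 0 \<and> nf T0 \<bullet> (vtx T0 3 - vtx T0 1) = 0 \<and>
     (\<forall>p\<in>rel_interior (tri T0). \<exists>\<epsilon>>0. \<forall>t. 0 < t \<and> t < \<epsilon> \<longrightarrow>
        p + t *\<^sub>R nf T0 \<in> outside (msurf F) \<and> p - t *\<^sub>R nf T0 \<in> inside (msurf F))"
    using assms(3) T0(1) unfolding outward_face_normals_def by (rule bspec)
  have nfT: "norm (nf T) = 1" "nf T \<bullet> (b - a) = 0" "nf T \<bullet> (c - a) = 0"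
    using OT unfolding Tabc by simp_all
  have outT: "\<forall>p\<in>rel_interior (tri T). \<exists>e>0. \<forall>t. 0 < t \<and> t < e \<longrightarrow>
        p + t *\<^sub>R nf T \<in> outside (msurf F) \<and> p - t *\<^sub>R nf T \<in> inside (msurf F)"
    using OT by blast
  have nfT0: "norm (nf T0) = 1" "nf T0 \<bullet> (b0 - a0) = 0" "nf T0 \<bullet> (c0 - a0) = 0"
    using OT0 unfolding T0abc by simp_all
  have outT0: "\<forall>p\<in>rel_interior (tri T0). \<exists>e>0. \<forall>t. 0 < t \<and> t < e \<longrightarrow>
        p + t *\<^sub>R nf T0 \<in> outside (msurf F) \<and> p - t *\<^sub>R nf T0 \<in> inside (msurf F)"
    using OT0 by blast
  have sri: "s \<in> rel_interior (convex hull {a,b,c})" using assms(10) vT by (simp add: tri_def)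
  have s0: "s = \<beta> 1 *\<^sub>R a0 + \<beta> 2 *\<^sub>R b0 + \<beta> 3 *\<^sub>R c0" using \<beta>(4) by (simp add: sum3 T0abc)
  have shull0: "s \<in> convex hull {a0,b0,c0}"
  proof -
    have b1: "\<beta> 1 + \<beta> 2 + \<beta> 3 = 1" using \<beta>(2) by (simp add: sum3)
    show ?thesis unfolding convex_hull_3
      apply (rule CollectI)
      apply (rule exI[of _ "\<beta> 1"], rule exI[of _ "\<beta> 2"], rule exI[of _ "\<beta> 3"])
      using s0 b1 \<beta>(1) by simp
  qed
  have VV: "{a0,b0,c0} = {a,b,c}"
  proof (cases "T0 = T")
    case True then show ?thesis using vT by simp
  next
    case False
    have WT: "\<forall>T\<in>F. \<forall>T'\<in>F. T \<noteq> T' \<longrightarrow> tri T \<inter> tri T' = convex hull (verts T \<inter> verts T')"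
      using assms(1) unfolding watertight_def by (elim conjE)
    have "tri T \<inter> tri T0 = convex hull (verts T \<inter> verts T0)"
      using WT assms(9) T0(1) False by simp
    moreover have "s \<in> tri T" using sri rel_interior_subset vT unfolding tri_def by (metis subsetD)
    moreover have "s \<in> tri T0" using shull0 vT unfolding tri_def by simp
    ultimately have sI: "s \<in> convex hull ({a,b,c} \<inter> {a0,b0,c0})" using vT by (metis IntI)
    have sub: "{a,b,c} \<subseteq> {a0,b0,c0}"
    proof (rule ccontr)
      assume "\<not> {a,b,c} \<subseteq> {a0,b0,c0}"
      then obtain v where v: "v \<in> {a,b,c}" "v \<notin> {a0,b0,c0}" by (meson subsetI)
      have "{a,b,c} \<inter> {a0,b0,c0} \<subseteq> {a,b,c} - {v}" using v by (intro subsetI) auto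
      then have "convex hull ({a,b,c} \<inter> {a0,b0,c0}) \<subseteq> convex hull ({a,b,c} - {v})" by (rule hull_mono)
      then have "s \<in> convex hull ({a,b,c} - {v})" using sI by (rule subsetD)
      moreover have "finite {a,b,c}" by simp
      ultimately show False using relint_not_facet[OF _ aff v(1) sri] by blast
    qed
    have c0: "card {a0,b0,c0} = 3" using dist0 by simp
    have c1: "card {a,b,c} = 3" using dist by simp
    have "finite {a0,b0,c0}" by simp
    from card_subset_eq[OF this sub] c0 c1 show ?thesis by simp
  qed
  define N where "N = cross3 (b - a) (c - a)"
  have N0: "N \<noteq> 0"
  proof
    assume "N = 0"
    then have "collinear {0, b - a, c - a}" unfolding N_def cross_eq_0 .
    moreover have "collinear {b,a,c} = collinear {0, b - a, c - a}"
      by (rule collinear_3) (simp add: NO_MATCH_def)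
    moreover have "{b,a,c} = {a,b,c}" by (simp add: insert_commute)
    ultimately show False using ncol by simp
  qed
  have NN: "N \<bullet> N \<noteq> 0" using N0 by simp
  have o1: "nf T0 \<bullet> (b - a) = 0" using orth_all[OF nfT0(2,3), of b a] VV by simp
  have o2: "nf T0 \<bullet> (c - a) = 0" using orth_all[OF nfT0(2,3), of c a] VV by simp
  have pT: "(N \<bullet> N) *\<^sub>R nf T = (nf T \<bullet> N) *\<^sub>R N" unfolding N_def by (rule par[OF nfT(2,3)])
  have pT0: "(N \<bullet> N) *\<^sub>R nf T0 = (nf T0 \<bullet> N) *\<^sub>R N" unfolding N_def by (rule par[OF o1 o2])
  define k where "k = (nf T \<bullet> N) / (N \<bullet> N)"
  define k0 where "k0 = (nf T0 \<bullet> N) / (N \<bullet> N)"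
  have nk: "nf T = k *\<^sub>R N"
  proof -
    have "nf T = (1 / (N \<bullet> N)) *\<^sub>R ((N \<bullet> N) *\<^sub>R nf T)" using NN by simp
    also have "\<dots> = k *\<^sub>R N" unfolding pT k_def by simp
    finally show ?thesis .
  qed
  have nk0: "nf T0 = k0 *\<^sub>R N"
  proof -
    have "nf T0 = (1 / (N \<bullet> N)) *\<^sub>R ((N \<bullet> N) *\<^sub>R nf T0)" using NN by simp
    also have "\<dots> = k0 *\<^sub>R N" unfolding pT0 k0_def by simp
    finally show ?thesis .
  qed
  have nNp: "norm N \<noteq> 0" using N0 by simp
  have "\<bar>k\<bar> * norm N = 1" using nfT(1) nk by simp
  then have ka: "\<bar>k\<bar> = 1 / norm N" using nNp by (simp add: eq_divide_eq)
  have "\<bar>k0\<bar> * norm N = 1" using nfT0(1) nk0 by simp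
  then have ka0: "\<bar>k0\<bar> = 1 / norm N" using nNp by (simp add: eq_divide_eq)
  have kk: "\<bar>k0\<bar> = \<bar>k\<bar>" using ka ka0 by simp
  have tri_eq: "tri T0 = tri T" unfolding tri_def using vT VV by simp
  have nfeq: "nf T0 = nf T"
  proof (cases "k0 = k")
    case True then show ?thesis using nk nk0 by simp
  next
    case False
    then have "k0 = - k" using kk False by arith
    then have neg: "nf T0 = - nf T" using nk nk0 by simp
    have "\<exists>e>0. \<forall>t. 0 < t \<and> t < e \<longrightarrow>
        s + t *\<^sub>R nf T \<in> outside (msurf F) \<and> s - t *\<^sub>R nf T \<in> inside (msurf F)"
      using outT assms(10) by (rule bspec)
    then obtain e1 where e1: "e1 > 0" "\<forall>t. 0 < t \<and> t < e1 \<longrightarrow>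
        s + t *\<^sub>R nf T \<in> outside (msurf F) \<and> s - t *\<^sub>R nf T \<in> inside (msurf F)"
      by (elim exE conjE) (rule that)
    have s0r: "s \<in> rel_interior (tri T0)" using assms(10) tri_eq by simp
    have "\<exists>e>0. \<forall>t. 0 < t \<and> t < e \<longrightarrow>
        s + t *\<^sub>R nf T0 \<in> outside (msurf F) \<and> s - t *\<^sub>R nf T0 \<in> inside (msurf F)"
      using outT0 s0r by (rule bspec)
    then obtain e2 where e2: "e2 > 0" "\<forall>t. 0 < t \<and> t < e2 \<longrightarrow>
        s + t *\<^sub>R nf T0 \<in> outside (msurf F) \<and> s - t *\<^sub>R nf T0 \<in> inside (msurf F)"
      by (elim exE conjE) (rule that)
    define t where "t = min e1 e2 / 2"
    have t1: "0 < t \<and> t < e1" using e1(1) e2(1) by (auto simp: t_def)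
    have t2: "0 < t \<and> t < e2" using e1(1) e2(1) by (auto simp: t_def)
    have A1: "s + t *\<^sub>R nf T \<in> outside (msurf F)" using mp[OF spec[OF e1(2), of t] t1] by (rule conjunct1)
    have "s - t *\<^sub>R nf T0 \<in> inside (msurf F)" using mp[OF spec[OF e2(2), of t] t2] by (rule conjunct2)
    then have A2: "s + t *\<^sub>R nf T \<in> inside (msurf F)" using neg by simp
    show ?thesis using A1 A2 inside_Int_outside[of "msurf F"] by (metis IntI empty_iff)
  qed
  have ll: "l0 = l"
  proof -
    have "nf T \<bullet> (a - a0) = 0" using orth_all[OF nfT(2,3), of a a0] VV by auto
    then show ?thesis unfolding l0_def l_def offset_def nfeq using Tabc T0abc
      by (simp add: inner_diff_left inner_diff_right inner_commute)
  qed
  have nn1: "nf T \<bullet> nf T = 1" using nfT(1) by (simp add: norm_eq_1)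
  have dl: "distinct [vtx T 1, vtx T 2, vtx T 3]" using dist Tabc by simp
  have dl0: "distinct [vtx T0 1, vtx T0 2, vtx T0 3]" using dist0 T0abc by simp
  have VV': "verts T0 = verts T" using vT VV by simp
  have avec_eq: "avec nf nv 1 T0 i = avec nf nv 1 T j"
    if ij: "i \<in> {1,2,3}" "j \<in> {1,2,3}" "vtx T0 i = vtx T j" for i j
  proof -
    have cj: "cross3 (vtx T (nxt j) - vtx T j) (vtx T (nxt (nxt j)) - vtx T j) = N"
      using cyc[OF ij(2), of T] unfolding N_def Tabc by simp
    note pr = pair_lemma[OF dl dl0 VV' ij]
    have "al (1 *\<^sub>R nf T) (vtx T0 (nxt i) - vtx T j) (vtx T0 (nxt (nxt i)) - vtx T j) (nv (vtx T j)) =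
          al (nf T) (vtx T (nxt j) - vtx T j) (vtx T (nxt (nxt j)) - vtx T j) (nv (vtx T j))"
      by (rule al_sym) (use cj N0 nn1 nk pr in auto)
    then have AN: "aligned_normal nf nv 1 T0 i = aligned_normal nf nv 1 T j"
      unfolding aligned_al nfeq ij(3) by simp
    show ?thesis unfolding avec_def AN nfeq ..
  qed
  define A where "A v = (if v = a then \<alpha> 1 else if v = b then \<alpha> 2 else \<alpha> 3)" for v
  define B where "B v = (if v = a0 then \<beta> 1 else if v = b0 then \<beta> 2 else \<beta> 3)" for v
  have sumabc: "sum f {a,b,c} = f a + f b + f c" for f :: "point \<Rightarrow> 'z::comm_monoid_add"
    using dist by (simp add: add.assoc)
  have sumabc0: "sum f {a0,b0,c0} = f a0 + f b0 + f c0" for f :: "point \<Rightarrow> 'z::comm_monoid_add"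
    using dist0 by (simp add: add.assoc)
  have Aa: "A a = \<alpha> 1" "A b = \<alpha> 2" "A c = \<alpha> 3" using dist by (simp_all add: A_def)
  have Bb: "B a0 = \<beta> 1" "B b0 = \<beta> 2" "B c0 = \<beta> 3" using dist0 by (simp_all add: B_def)
  have sA: "sum A {a,b,c} = 1" unfolding sumabc Aa using assms(12) by (simp add: sum3)
  have sB: "sum B {a,b,c} = 1" unfolding VV[symmetric] sumabc0 Bb using \<beta>(2) by (simp add: sum3)
  have vA: "(\<Sum>v\<in>{a,b,c}. A v *\<^sub>R v) = s" unfolding sumabc Aa using assms(13) by (simp add: sum3 Tabc)
  have vB: "(\<Sum>v\<in>{a,b,c}. B v *\<^sub>R v) = s" unfolding VV[symmetric] sumabc0 Bb using s0 by simp
  have AB: "A v = B v" if "v \<in> {a,b,c}" for v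
  proof -
    have eqAB: "(\<Sum>v\<in>{a,b,c}. A v *\<^sub>R v) = (\<Sum>v\<in>{a,b,c}. B v *\<^sub>R v)"
      using vA vB by (rule trans[OF _ sym])
    have fin: "finite {a,b,c}" by simp
    show ?thesis by (rule bary_unique[OF fin aff sA sB eqAB that])
  qed
  define g where "g v = (if v = a then \<alpha> 1 *\<^sub>R avec nf nv 1 T 1 else if v = b then \<alpha> 2 *\<^sub>R avec nf nv 1 T 2
     else \<alpha> 3 *\<^sub>R avec nf nv 1 T 3)" for v
  have ga: "g a = \<alpha> 1 *\<^sub>R avec nf nv 1 T 1" "g b = \<alpha> 2 *\<^sub>R avec nf nv 1 T 2"
    "g c = \<alpha> 3 *\<^sub>R avec nf nv 1 T 3" using dist by (simp_all add: g_def)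
  have Wg: "W = g a + g b + g c" unfolding W_def ga by (rule sum3)
  have gi: "\<beta> i *\<^sub>R avec nf nv 1 T0 i = g (vtx T0 i)" if i: "i \<in> {1,2,3}" for i
  proof -
    have i3: "i = 1 \<or> i = 2 \<or> i = 3" using i by simp
    have vin0: "vtx T0 i \<in> {a0,b0,c0}" using i3 by (elim disjE) (simp_all add: T0abc)
    have vin: "vtx T0 i \<in> {a,b,c}" using vin0 VV by simp
    have Bi: "B (vtx T0 i) = \<beta> i" using i3 by (elim disjE) (simp_all add: T0abc Bb)
    have bi: "\<beta> i = A (vtx T0 i)" using AB[OF vin] Bi by simp
    have "vtx T0 i = a \<or> vtx T0 i = b \<or> vtx T0 i = c" using vin by simp
    then consider "vtx T0 i = a" | "vtx T0 i = b" | "vtx T0 i = c" by (elim disjE) simp_all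
    then show ?thesis
    proof cases
      case 1
      have "avec nf nv 1 T0 i = avec nf nv 1 T 1" by (rule avec_eq) (use i 1 Tabc in simp_all)
      then show ?thesis using bi 1 ga Aa by simp
    next
      case 2
      have "avec nf nv 1 T0 i = avec nf nv 1 T 2" by (rule avec_eq) (use i 2 Tabc in simp_all)
      then show ?thesis using bi 2 ga Aa by simp
    next
      case 3
      have "avec nf nv 1 T0 i = avec nf nv 1 T 3" by (rule avec_eq) (use i 3 Tabc in simp_all)
      then show ?thesis using bi 3 ga Aa by simp
    qed
  qed
  have sg: "(\<Sum>i\<in>{1,2,3}. \<beta> i *\<^sub>R avec nf nv 1 T0 i) = W"
  proof -
    have g1: "\<beta> 1 *\<^sub>R avec nf nv 1 T0 1 = g a0" using gi[of 1] T0abc by simp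
    have g2: "\<beta> 2 *\<^sub>R avec nf nv 1 T0 2 = g b0" using gi[of 2] T0abc by simp
    have g3: "\<beta> 3 *\<^sub>R avec nf nv 1 T0 3 = g c0" using gi[of 3] T0abc by simp
    have "(\<Sum>i\<in>{1,2,3}. \<beta> i *\<^sub>R avec nf nv 1 T0 i) = g a0 + g b0 + g c0"
      unfolding sum3 g1 g2 g3 ..
    also have "\<dots> = sum g {a0,b0,c0}" by (rule sumabc0[symmetric])
    also have "\<dots> = sum g {a,b,c}" using VV by simp
    also have "\<dots> = W" unfolding Wg by (rule sumabc)
    finally show ?thesis .
  qed
  have xs0: "x - s = l0 *\<^sub>R (\<Sum>i\<in>{1,2,3}. \<beta> i *\<^sub>R avec nf nv 1 T0 i)"
    using \<beta>(3,4) unfolding sum3 by (simp add: algebra_simps)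
  have xs: "x - s = l *\<^sub>R W" using xs0 sg ll by simp
  have "s \<in> tri T" using assms(10) rel_interior_subset by (rule subsetD[rotated])
  then have sM: "s \<in> msurf F" using assms(9) unfolding msurf_def by (rule UN_I[rotated])
  have xM: "x \<notin> msurf F" using assms(7) outside_no_overlap[of "msurf F"] by (metis IntI empty_iff)
  have xns: "x \<noteq> s" using sM xM by metis
  have Wn: "W \<noteq> 0" using xs xns by auto
  have lp: "l > 0" using xs xns l0 ll by (cases "l = 0") auto
  have nx: "norm (x - s) = l * norm W" using xs lp by simp
  have last: "x - s = norm (x - s) *\<^sub>R (W /\<^sub>R norm W)" using nx xs Wn by simp
  have np: "norm (x - s) > 0" using xns by simp
  show ?thesis unfolding W_def[symmetric] l_def[symmetric] using xs Wn np last by blast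
qed
end
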